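(* Let $(\Omega,\Sigma,\mu;\phi)$ be a measure preserving dynamical system with associated Perron-Frobenius operator $P$ on $L^1(\Omega,\Sigma,\mu)$. Then the following are equivalent: (i) $P$ is exact, i.e. $\lim_{n\to\infty}P^nf=\bigl(\int_\Omega f\,d\mu\bigr)\mathbf{1}$ in $L^1$ for each $f\in L^1(\Omega,\Sigma,\mu)$. (ii) For each $B\in\Sigma$, \[\lim_{n\to\infty}\sup_{A\in\Sigma}\bigl|\mu(\phi^{-n}(A)\cap B)-\mu(A)\mu(B)\bigr|=0.\] (iii) For each $B\in\Sigma$ there exists $D\in\Sigma$ with $\mu(D)>0$ such that \[\lim_{n\to\infty}\sup_{A\in\Sigma_D}\bigl|\mu(\phi^{-n}(A)\cap B)-\mu(A)\mu(B)\bigr|=0,\] where $\Sigma_D=\{A\cap D:A\in\Sigma\}$.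
   Context: A measure preserving dynamical system $(\Omega,\Sigma,\mu;\phi)$ is a probability space with a measurable map $\phi\colon\Omega\to\Omega$ such that $\mu(\phi^{-1}(A))=\mu(A)$ for all $A\in\Sigma$. The Perron-Frobenius operator $P$ is the unique linear positive operator on $L^1(\Omega,\Sigma,\mu)$ with $\int_A Pf\,d\mu=\int_{\phi^{-1}(A)}f\,d\mu$ for all $f\in L^1$, $A\in\Sigma$. $\mathbf{1}$ is the constant function one. *)

theory Defs
  imports "HOL-Probability.Probability"
begin

definition mpds :: "'a measure \<Rightarrow> ('a \<Rightarrow> 'a) \<Rightarrow> bool" where
  "mpds M \<phi> \<longleftrightarrow> prob_space M \<and> \<phi> \<in> M \<rightarrow>\<^sub>M M \<and>
     (\<forall>A \<in> sets M. emeasure M (\<phi> -` A \<inter> space M) = emeasure M A)"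

text \<open>This determines P f almost
  everywhere, and only depends on the a.e.-class of f.\<close>
definition perron_frobenius :: "'a measure \<Rightarrow> ('a \<Rightarrow> 'a) \<Rightarrow> (('a \<Rightarrow> real) \<Rightarrow> ('a \<Rightarrow> real)) \<Rightarrow> bool" where
  "perron_frobenius M \<phi> P \<longleftrightarrow>
     (\<forall>f. integrable M f \<longrightarrow> integrable M (P f) \<and>
        (\<forall>A \<in> sets M. (\<integral>x\<in>A. P f x \<partial>M) = (\<integral>x\<in>(\<phi> -` A \<inter> space M). f x \<partial>M)))"

definition pf_exact :: "'a measure \<Rightarrow> (('a \<Rightarrow> real) \<Rightarrow> ('a \<Rightarrow> real)) \<Rightarrow> bool" where
  "pf_exact M P \<longleftrightarrow>
     (\<forall>f. integrable M f \<longrightarrow>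
        (\<lambda>n. \<integral>x. \<bar>(P ^^ n) f x - (\<integral>y. f y \<partial>M)\<bar> \<partial>M) \<longlonglongrightarrow> 0)"

end

theory Submission
  imports Defs
begin


locale pfs = prob_space M for M :: "'a measure" +
  fixes \<phi> :: "'a \<Rightarrow> 'a" and P :: "('a\<Rightarrow>real) \<Rightarrow> ('a\<Rightarrow>real)"
  assumes phi_meas: "\<phi> \<in> M \<rightarrow>\<^sub>M M"
  and phi_pres: "\<And>A. A \<in> sets M \<Longrightarrow> emeasure M (\<phi> -` A \<inter> space M) = emeasure M A"
  and PF_int: "\<And>f. integrable M f \<Longrightarrow> integrable M (P f)"
  and PF_eq: "\<And>f A. integrable M f \<Longrightarrow> A \<in> sets M \<Longrightarrow>
      (\<integral>x\<in>A. P f x \<partial>M) = (\<integral>x\<in>(\<phi> -` A \<inter> space M). f x \<partial>M)"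
begin

lemma phin_meas: "(\<phi>^^n) \<in> M \<rightarrow>\<^sub>M M"
proof (induction n)
  case (Suc n)
  show ?case using measurable_comp[OF Suc phi_meas] by (simp add: comp_def)
qed simp

lemma phin_space: "x \<in> space M \<Longrightarrow> (\<phi>^^n) x \<in> space M"
  by (rule measurable_space[OF phin_meas])

lemma phin_vimage: "(\<phi>^^Suc n) -` A \<inter> space M = (\<phi>^^n) -` (\<phi> -` A \<inter> space M) \<inter> space M"
  by (auto simp: phin_space)

lemma phin_pres: "A \<in> sets M \<Longrightarrow> emeasure M ((\<phi>^^n) -` A \<inter> space M) = emeasure M A"
proof (induction n arbitrary: A)
  case 0 then show ?case by (simp add: sets.Int_space_eq2)
next
  case (Suc n)
  have "\<phi> -` A \<inter> space M \<in> sets M" using Suc.prems phi_meas measurable_sets by blast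
  have "emeasure M ((\<phi>^^Suc n) -` A \<inter> space M) = emeasure M ((\<phi>^^n) -` (\<phi> -` A \<inter> space M) \<inter> space M)"
    by (simp only: phin_vimage)
  also have "\<dots> = emeasure M A" using Suc.IH[OF \<open>\<phi> -` A \<inter> space M \<in> sets M\<close>] phi_pres[OF Suc.prems] by simp
  finally show ?case .
qed

lemma phin_pres_m: "A \<in> sets M \<Longrightarrow> measure M ((\<phi>^^n) -` A \<inter> space M) = measure M A"
  by (simp add: measure_def phin_pres)

lemma distr_phin: "distr M M (\<phi>^^n) = M"
  by (rule measure_eqI) (auto simp: emeasure_distr phin_meas phin_pres)

lemma Pn: "integrable M f \<Longrightarrow> integrable M ((P^^n) f) \<and>
   (\<forall>A\<in>sets M. (\<integral>x\<in>A. (P^^n) f x \<partial>M) = (\<integral>x\<in>((\<phi>^^n) -` A \<inter> space M). f x \<partial>M))"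
proof (induction n)
  case 0 then show ?case by (simp add: sets.Int_space_eq2)
next
  case (Suc n)
  then have I: "integrable M ((P^^n) f)" by simp
  show ?case
  proof (intro conjI ballI)
    show "integrable M ((P^^Suc n) f)" using PF_int[OF I] by simp
    fix A assume A: "A \<in> sets M"
    have A': "\<phi> -` A \<inter> space M \<in> sets M" using A phi_meas measurable_sets by blast
    have "(\<integral>x\<in>A. (P^^Suc n) f x \<partial>M) = (\<integral>x\<in>(\<phi> -` A \<inter> space M). (P^^n) f x \<partial>M)"
      using PF_eq[OF I A] by simp
    also have "\<dots> = (\<integral>x\<in>((\<phi>^^n) -` (\<phi> -` A \<inter> space M) \<inter> space M). f x \<partial>M)"
      using Suc A' by simp
    finally show "(\<integral>x\<in>A. (P^^Suc n) f x \<partial>M) = (\<integral>x\<in>((\<phi>^^Suc n) -` A \<inter> space M). f x \<partial>M)"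
      by (simp only: phin_vimage)
  qed
qed

lemma Pn_int: assumes "integrable M f" shows "integrable M ((P^^n) f)"
  by (rule conjunct1[OF Pn[OF assms]])
lemma Pn_eq: assumes "integrable M f" "A \<in> sets M" shows
   "(\<integral>x\<in>A. (P^^n) f x \<partial>M) = (\<integral>x\<in>((\<phi>^^n) -` A \<inter> space M). f x \<partial>M)"
  by (rule bspec[OF conjunct2[OF Pn[OF assms(1)]] assms(2)])

lemma intind: "A \<in> sets M \<Longrightarrow> integrable M f \<Longrightarrow> integrable M (\<lambda>x. indicator A x * (f x::real))"
  using integrable_mult_indicator[of A M f] by simp

lemma contr:
  fixes u v :: "'a \<Rightarrow> real"
  assumes psi: "\<psi> \<in> M \<rightarrow>\<^sub>M M" and u: "integrable M u" and v: "integrable M v"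
  and eq: "\<And>A. A \<in> sets M \<Longrightarrow> (\<integral>x\<in>A. u x \<partial>M) = (\<integral>x\<in>(\<psi> -` A \<inter> space M). v x \<partial>M)"
  shows "(\<integral>x. \<bar>u x\<bar> \<partial>M) \<le> (\<integral>x. \<bar>v x\<bar> \<partial>M)"
proof -
  have um[measurable]: "u \<in> borel_measurable M" using u by (rule borel_measurable_integrable)
  define S where "S = {x\<in>space M. 0 \<le> u x}"
  have S: "S \<in> sets M" unfolding S_def using borel_measurable_le[of "\<lambda>_. 0::real" M u] um by simp
  have Sc: "space M - S \<in> sets M" using S by auto
  have S1: "\<psi> -` S \<inter> space M \<in> sets M" using psi S measurable_sets by blast
  have S2: "\<psi> -` (space M - S) \<inter> space M \<in> sets M" using psi Sc measurable_sets by blast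
  have "(\<integral>x. \<bar>u x\<bar> \<partial>M) = (\<integral>x. indicator S x * u x - indicator (space M - S) x * u x \<partial>M)"
    by (rule Bochner_Integration.integral_cong[OF refl]) (auto simp: S_def indicator_def)
  also have "\<dots> = (\<integral>x. indicator S x * u x \<partial>M) - (\<integral>x. indicator (space M - S) x * u x \<partial>M)"
    by (rule Bochner_Integration.integral_diff[OF intind[OF S u] intind[OF Sc u]])
  also have "\<dots> = (\<integral>x\<in>S. u x \<partial>M) - (\<integral>x\<in>space M - S. u x \<partial>M)"
    unfolding set_lebesgue_integral_def by simp
  also have "\<dots> = (\<integral>x\<in>(\<psi> -` S \<inter> space M). v x \<partial>M) - (\<integral>x\<in>(\<psi> -` (space M - S) \<inter> space M). v x \<partial>M)"
    using eq[OF S] eq[OF Sc] by simp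
  also have "\<dots> = (\<integral>x. indicator (\<psi> -` S \<inter> space M) x * v x \<partial>M) - (\<integral>x. indicator (\<psi> -` (space M - S) \<inter> space M) x * v x \<partial>M)"
    unfolding set_lebesgue_integral_def by simp
  also have "\<dots> = (\<integral>x. indicator (\<psi> -` S \<inter> space M) x * v x - indicator (\<psi> -` (space M - S) \<inter> space M) x * v x \<partial>M)"
    by (rule Bochner_Integration.integral_diff[OF intind[OF S1 v] intind[OF S2 v], symmetric])
  also have "\<dots> \<le> (\<integral>x. \<bar>v x\<bar> \<partial>M)"
  proof (rule Bochner_Integration.integral_mono)
    show "integrable M (\<lambda>x. indicator (\<psi> -` S \<inter> space M) x * v x - indicator (\<psi> -` (space M - S) \<inter> space M) x * v x)"
      by (rule Bochner_Integration.integrable_diff[OF intind[OF S1 v] intind[OF S2 v]])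
    show "integrable M (\<lambda>x. \<bar>v x\<bar>)" using v by (rule integrable_abs)
    fix x show "indicator (\<psi> -` S \<inter> space M) x * v x - indicator (\<psi> -` (space M - S) \<inter> space M) x * v x \<le> \<bar>v x\<bar>"
      by (auto simp: indicator_def)
  qed
  finally show ?thesis .
qed

lemma set_int_const_diff:
  assumes f: "integrable M f" and A: "A \<in> sets M"
  shows "(\<integral>x\<in>A. f x - c \<partial>M) = (\<integral>x\<in>A. f x \<partial>M) - c * measure M A"
proof -
  have 1: "integrable M (\<lambda>x. indicator A x * f x)" by (rule intind[OF A f])
  have 2: "integrable M (\<lambda>x. indicator A x * c)" by (rule intind[OF A]) simp
  have 3: "(\<integral>x. indicator A x * c \<partial>M) = c * measure M A"
    using A by (simp add: mult.commute sets.Int_space_eq2)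
  have "(\<integral>x\<in>A. f x - c \<partial>M) = (\<integral>x. indicator A x * f x - indicator A x * c \<partial>M)"
    unfolding set_lebesgue_integral_def by (simp add: right_diff_distrib)
  also have "\<dots> = (\<integral>x. indicator A x * f x \<partial>M) - (\<integral>x. indicator A x * c \<partial>M)"
    by (rule Bochner_Integration.integral_diff[OF 1 2])
  finally show ?thesis using 3 unfolding set_lebesgue_integral_def by simp
qed

lemma set_int_diff:
  fixes f g :: "'a \<Rightarrow> real"
  assumes f: "integrable M f" and g: "integrable M g" and A: "A \<in> sets M"
  shows "(\<integral>x\<in>A. f x - g x \<partial>M) = (\<integral>x\<in>A. f x \<partial>M) - (\<integral>x\<in>A. g x \<partial>M)"
proof -
  have 1: "integrable M (\<lambda>x. indicator A x * f x)" by (rule intind[OF A f])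
  have 2: "integrable M (\<lambda>x. indicator A x * g x)" by (rule intind[OF A g])
  have "(\<integral>x\<in>A. f x - g x \<partial>M) = (\<integral>x. indicator A x * f x - indicator A x * g x \<partial>M)"
    unfolding set_lebesgue_integral_def by (simp add: right_diff_distrib)
  also have "\<dots> = (\<integral>x. indicator A x * f x \<partial>M) - (\<integral>x. indicator A x * g x \<partial>M)"
    by (rule Bochner_Integration.integral_diff[OF 1 2])
  finally show ?thesis unfolding set_lebesgue_integral_def by simp
qed

lemma Pn_shift: "integrable M f \<Longrightarrow> A \<in> sets M \<Longrightarrow>
   (\<integral>x\<in>A. (P^^n) f x - c \<partial>M) = (\<integral>x\<in>((\<phi>^^n) -` A \<inter> space M). f x - c \<partial>M)"
  apply (subst set_int_const_diff, simp add: Pn_int, simp)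
  apply (subst set_int_const_diff, simp, meson measurable_sets phin_meas)
  using Pn_eq phin_pres_m by simp

lemma Pn_contr_const: "integrable M f \<Longrightarrow>
   (\<integral>x. \<bar>(P^^(n+m)) f x - c\<bar> \<partial>M) \<le> (\<integral>x. \<bar>(P^^n) f x - c\<bar> \<partial>M)"
proof -
  assume f: "integrable M f"
  then have g: "integrable M ((P^^n) f)" by (rule Pn_int)
  have e: "(P^^(n+m)) f = (P^^m) ((P^^n) f)" by (metis add.commute comp_apply funpow_add)
  have "(\<integral>x. \<bar>(P^^m) ((P^^n) f) x - c\<bar> \<partial>M) \<le> (\<integral>x. \<bar>(P^^n) f x - c\<bar> \<partial>M)"
  proof (rule contr[OF phin_meas[of m]])
    show "integrable M (\<lambda>x. (P^^m) ((P^^n) f) x - c)" using Pn_int[OF g] by simp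
    show "integrable M (\<lambda>x. (P^^n) f x - c)" using g by simp
    fix A assume "A \<in> sets M"
    then show "(\<integral>x\<in>A. (P^^m) ((P^^n) f) x - c \<partial>M) = (\<integral>x\<in>((\<phi>^^m) -` A \<inter> space M). (P^^n) f x - c \<partial>M)"
      by (rule Pn_shift[OF g])
  qed
  then show ?thesis by (simp only: e)
qed

lemma Pn_contr_diff: "integrable M f \<Longrightarrow> integrable M g \<Longrightarrow>
   (\<integral>x. \<bar>(P^^n) f x - (P^^n) g x\<bar> \<partial>M) \<le> (\<integral>x. \<bar>f x - g x\<bar> \<partial>M)"
proof -
  assume f: "integrable M f" and g: "integrable M g"
  show ?thesis
  proof (rule contr[OF phin_meas[of n]])
    fix A assume A: "A \<in> sets M"
    have A': "(\<phi>^^n) -` A \<inter> space M \<in> sets M" by (meson A measurable_sets phin_meas)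
    show "(\<integral>x\<in>A. (P^^n) f x - (P^^n) g x \<partial>M) = (\<integral>x\<in>((\<phi>^^n) -` A \<inter> space M). f x - g x \<partial>M)"
      using Pn_eq[OF f A, of n] Pn_eq[OF g A, of n] set_int_diff[OF f g A'] set_int_diff[OF Pn_int[OF f] Pn_int[OF g] A]
      by simp
  qed (use f g Pn_int in auto)
qed

end


context pfs begin

definition Fa :: "nat \<Rightarrow> 'a measure" where
  "Fa n = vimage_algebra (space M) (\<phi>^^n) M"

lemma phin_Pi: "(\<phi>^^n) \<in> space M \<rightarrow> space M"
  by (auto simp: phin_space)

lemma Fa_space[simp]: "space (Fa n) = space M"
  by (simp add: Fa_def)

lemma Fa_sets: "sets (Fa n) = {(\<phi>^^n) -` C \<inter> space M | C. C \<in> sets M}"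
  unfolding Fa_def by (rule sets_vimage_algebra2[OF phin_Pi])

lemma Fa_sub: "subalgebra M (Fa n)"
  unfolding subalgebra_def using measurable_sets[OF phin_meas] by (auto simp: Fa_sets)

lemma Fa_mono: assumes "n \<le> m" shows "subalgebra (Fa n) (Fa m)"
proof -
  obtain k where m: "m = k + n" using assms le_Suc_ex by (metis add.commute)
  have e1: "(\<phi>^^m) -` C \<inter> space M = (\<phi>^^n) -` ((\<phi>^^k) -` C \<inter> space M) \<inter> space M" for C
    unfolding m funpow_add using phin_space by auto
  have e2: "(\<phi>^^k) -` C \<inter> space M \<in> sets M" if "C \<in> sets M" for C
    using measurable_sets[OF phin_meas that] .
  show ?thesis unfolding subalgebra_def
  proof (intro conjI subsetI)
    fix A assume "A \<in> sets (Fa m)"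
    then obtain C where C: "C \<in> sets M" "A = (\<phi>^^m) -` C \<inter> space M" by (auto simp: Fa_sets)
    then have "A = (\<phi>^^n) -` ((\<phi>^^k) -` C \<inter> space M) \<inter> space M" using e1 by simp
    then show "A \<in> sets (Fa n)" unfolding Fa_sets using e2[OF C(1)] by blast
  qed simp
qed

lemma Fa_sf: "sigma_finite_subalgebra M (Fa n)"
  by (rule finite_measure_subalgebra_is_sigma_finite)
    (simp add: finite_measure_subalgebra_def finite_measure_subalgebra_axioms_def Fa_sub finite_measure_axioms)

lemma int_comp_phin: "integrable M g \<Longrightarrow> integrable M (\<lambda>x. g ((\<phi>^^n) x))"
  for g :: "'a \<Rightarrow> real"
  using integrable_distr_eq[OF phin_meas, of g n] distr_phin by simp

lemma integral_comp_phin: "g \<in> borel_measurable M \<Longrightarrow> (\<integral>x. g ((\<phi>^^n) x) \<partial>M) = (\<integral>x. g x \<partial>M)"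
  for g :: "'a \<Rightarrow> real"
  using integral_distr[OF phin_meas, of g n] distr_phin by simp

lemma link:
  assumes f: "integrable M f"
  shows "AE x in M. real_cond_exp M (Fa n) f x = (P^^n) f ((\<phi>^^n) x)"
proof -
  interpret sigma_finite_subalgebra M "Fa n" by (rule Fa_sf)
  define g where "g = (P^^n) f"
  have g: "integrable M g" unfolding g_def by (rule Pn_int[OF f])
  have gm: "g \<in> borel_measurable M" using g by auto
  show ?thesis unfolding g_def[symmetric]
  proof (rule real_cond_exp_charact)
    show "integrable M f" by fact
    show "integrable M (\<lambda>x. g ((\<phi>^^n) x))" by (rule int_comp_phin[OF g])
    show "(\<lambda>x. g ((\<phi>^^n) x)) \<in> borel_measurable (Fa n)"
      unfolding Fa_def using measurable_comp[OF measurable_vimage_algebra1[OF phin_Pi] gm] by (simp add: comp_def)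
    fix A assume "A \<in> sets (Fa n)"
    then obtain C where C: "C \<in> sets M" and A: "A = (\<phi>^^n) -` C \<inter> space M" by (auto simp: Fa_sets)
    have Cm: "(\<lambda>y. indicator C y * g y) \<in> borel_measurable M" by (rule borel_measurable_times[OF borel_measurable_indicator[OF C] gm])
    have "(\<integral>x\<in>A. g ((\<phi>^^n) x) \<partial>M) = (\<integral>x. indicator C ((\<phi>^^n) x) * g ((\<phi>^^n) x) \<partial>M)"
      unfolding set_lebesgue_integral_def A
      by (rule Bochner_Integration.integral_cong[OF refl]) (auto simp: indicator_def phin_space)
    also have "\<dots> = (\<integral>y. indicator C y * g y \<partial>M)"
      using integral_comp_phin[OF Cm, of n] by simp
    also have "\<dots> = (\<integral>y\<in>C. g y \<partial>M)" unfolding set_lebesgue_integral_def by simp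
    also have "\<dots> = (\<integral>x\<in>A. f x \<partial>M)" unfolding A g_def by (rule Pn_eq[OF f C])
    finally show "(\<integral>x\<in>A. f x \<partial>M) = (\<integral>x\<in>A. g ((\<phi>^^n) x) \<partial>M)" by simp
  qed
qed

lemma link_int:
  assumes f: "integrable M f"
  shows "(\<integral>x. \<bar>(P^^n) f x - c\<bar> \<partial>M) = (\<integral>x. \<bar>real_cond_exp M (Fa n) f x - c\<bar> \<partial>M)"
proof -
  have gm: "(\<lambda>x. \<bar>(P^^n) f x - c\<bar>) \<in> borel_measurable M" using Pn_int[OF f, of n] by auto
  have "(\<integral>x. \<bar>(P^^n) f x - c\<bar> \<partial>M) = (\<integral>x. \<bar>(P^^n) f ((\<phi>^^n) x) - c\<bar> \<partial>M)"
    using integral_comp_phin[OF gm, of n] by simp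
  also have "\<dots> = (\<integral>x. \<bar>real_cond_exp M (Fa n) f x - c\<bar> \<partial>M)"
  proof (rule integral_cong_AE)
    show "(\<lambda>x. \<bar>(P^^n) f ((\<phi>^^n) x) - c\<bar>) \<in> borel_measurable M"
      using borel_measurable_integrable[OF int_comp_phin[OF Pn_int[OF f], of n n]]
      by (intro borel_measurable_abs borel_measurable_diff borel_measurable_const)
    show "(\<lambda>x. \<bar>real_cond_exp M (Fa n) f x - c\<bar>) \<in> borel_measurable M"
      by (intro borel_measurable_abs borel_measurable_diff borel_measurable_const borel_measurable_cond_exp2)
    show "AE x in M. \<bar>(P^^n) f ((\<phi>^^n) x) - c\<bar> = \<bar>real_cond_exp M (Fa n) f x - c\<bar>"
      using link[OF f, of n] by (rule AE_mp) simp
  qed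
  finally show ?thesis .
qed

end


context pfs begin

abbreviation Hiii where "Hiii \<equiv> (\<forall>B \<in> sets M. \<exists>D \<in> sets M. measure M D > 0 \<and>
            (\<lambda>n. SUP A \<in> (\<lambda>E. E \<inter> D) ` sets M.
                \<bar>measure M ((\<phi> ^^ n) -` A \<inter> space M \<inter> B) - measure M A * measure M B\<bar>)
            \<longlonglongrightarrow> 0)"

lemma term_le1: "\<bar>measure M X - measure M Y * measure M Z\<bar> \<le> 1"
proof -
  have "0 \<le> measure M X" "measure M X \<le> 1" "0 \<le> measure M Y" "measure M Y \<le> 1"
    "0 \<le> measure M Z" "measure M Z \<le> 1" by auto
  moreover have "measure M Y * measure M Z \<le> 1" "0 \<le> measure M Y * measure M Z"
    using calculation by (auto intro: mult_le_one)
  ultimately show ?thesis by linarith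
qed

lemma sup_sandwich:
  fixes g :: "nat \<Rightarrow> 'b \<Rightarrow> real"
  assumes L: "(\<lambda>n. SUP A \<in> S. g n A) \<longlonglongrightarrow> 0"
    and bnd: "\<And>n A. 0 \<le> g n A \<and> g n A \<le> 1"
    and a: "\<And>n. a n \<in> S"
  shows "(\<lambda>n. g n (a n)) \<longlonglongrightarrow> 0"
proof (rule tendsto_sandwich[of "\<lambda>n. 0" _ _ "\<lambda>n. SUP A \<in> S. g n A"])
  show "\<forall>\<^sub>F n in sequentially. 0 \<le> g n (a n)" using bnd by simp
  show "\<forall>\<^sub>F n in sequentially. g n (a n) \<le> (SUP A \<in> S. g n A)"
  proof (rule always_eventually, rule allI)
    fix n
    have "bdd_above (g n ` S)" by (rule bdd_aboveI2[where M=1]) (use bnd in blast)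
    then show "g n (a n) \<le> (SUP A \<in> S. g n A)" using a by (rule cSUP_upper[rotated])
  qed
qed (use L in auto)

lemma tail01:
  assumes H: Hiii and T: "T \<in> sets M"
    and C: "\<And>n. \<exists>C\<in>sets M. T = (\<phi>^^n) -` C \<inter> space M"
  shows "measure M T = 0 \<or> measure M T = 1"
proof -
  obtain D where D: "D \<in> sets M" "measure M D > 0" and L:
    "(\<lambda>n. SUP A \<in> (\<lambda>E. E \<inter> D) ` sets M.
                \<bar>measure M ((\<phi> ^^ n) -` A \<inter> space M \<inter> T) - measure M A * measure M T\<bar>) \<longlonglongrightarrow> 0"
    using H T by blast
  obtain Cs where Cs: "\<And>n. Cs n \<in> sets M" "\<And>n. T = (\<phi>^^n) -` Cs n \<inter> space M"
    using C by metis
  define t where "t = measure M T"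
  define z where "z n = measure M (Cs n \<inter> D)" for n
  let ?g = "\<lambda>n A. \<bar>measure M ((\<phi> ^^ n) -` A \<inter> space M \<inter> T) - measure M A * measure M T\<bar>"
  have bnd: "\<And>n A. 0 \<le> ?g n A \<and> ?g n A \<le> 1" using term_le1 by auto
  have pre: "(\<phi> ^^ n) -` A \<inter> space M \<inter> T = (\<phi> ^^ n) -` (A \<inter> Cs n) \<inter> space M" for n A
    using Cs(2)[of n] by auto
  have m: "measure M ((\<phi> ^^ n) -` A \<inter> space M \<inter> T) = measure M (A \<inter> Cs n)" if "A \<in> sets M" for n A
    unfolding pre using that Cs(1) by (intro phin_pres_m) auto
  have "(\<lambda>n. ?g n D) \<longlonglongrightarrow> 0"
    by (rule sup_sandwich[OF L bnd]) (use D in \<open>auto intro!: image_eqI[of D _ D]\<close>)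
  moreover have "?g n D = \<bar>z n - measure M D * t\<bar>" for n
    using m[OF D(1), of n] by (simp add: z_def t_def Int_commute)
  ultimately have L1: "(\<lambda>n. \<bar>z n - measure M D * t\<bar>) \<longlonglongrightarrow> 0" by simp
  have "(\<lambda>n. ?g n (Cs n \<inter> D)) \<longlonglongrightarrow> 0"
    by (rule sup_sandwich[OF L bnd]) (use D Cs in \<open>auto intro!: image_eqI[of _ _ "Cs _"]\<close>)
  moreover have "?g n (Cs n \<inter> D) = \<bar>z n * (1 - t)\<bar>" for n
  proof -
    have e: "Cs n \<inter> D \<inter> Cs n = Cs n \<inter> D" by auto
    have "measure M ((\<phi> ^^ n) -` (Cs n \<inter> D) \<inter> space M \<inter> T) = z n"
      using m[of "Cs n \<inter> D" n] D(1) Cs(1)[of n] e by (simp add: z_def)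
    then show ?thesis by (simp add: z_def t_def algebra_simps)
  qed
  ultimately have L2: "(\<lambda>n. \<bar>z n * (1 - t)\<bar>) \<longlonglongrightarrow> 0" by simp
  have "(\<lambda>n. z n - measure M D * t) \<longlonglongrightarrow> 0" using L1 by (simp add: tendsto_rabs_zero_iff)
  then have "(\<lambda>n. (z n - measure M D * t) + measure M D * t) \<longlonglongrightarrow> 0 + measure M D * t"
    by (intro tendsto_add) auto
  then have zl: "z \<longlonglongrightarrow> measure M D * t" by simp
  have "(\<lambda>n. z n * (1 - t)) \<longlonglongrightarrow> measure M D * t * (1 - t)" by (intro tendsto_mult zl) auto
  moreover have "(\<lambda>n. z n * (1 - t)) \<longlonglongrightarrow> 0" using L2 by (simp add: tendsto_rabs_zero_iff)
  ultimately have "measure M D * t * (1 - t) = 0" by (rule LIMSEQ_unique)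
  then show ?thesis using D(2) unfolding t_def by auto
qed

end


lemma amgm_aux: fixes d e :: real assumes "0 < e" shows "\<bar>d\<bar> \<le> e/4 + d*d/e"
proof -
  have "0 \<le> (\<bar>d\<bar> - e/2)^2" by simp
  then have "e*\<bar>d\<bar> \<le> d*d + e*e/4" by (simp add: power2_eq_square algebra_simps abs_mult_self_eq)
  then have "\<bar>d\<bar> \<le> (d*d + e*e/4)/e" using assms by (simp add: pos_le_divide_eq mult.commute)
  also have "\<dots> = e/4 + d*d/e" using assms by (simp add: field_simps)
  finally show ?thesis .
qed

context pfs begin

lemma e_facts:
  assumes fm: "f \<in> borel_measurable M" and fK: "\<And>x. x \<in> space M \<Longrightarrow> \<bar>f x\<bar> \<le> K"
  shows "integrable M f"
    and "AE x in M. \<bar>real_cond_exp M (Fa n) f x\<bar> \<le> K"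
    and "integrable M (real_cond_exp M (Fa n) f)"
proof -
  show fi: "integrable M f" by (rule integrable_const_bound[where B=K]) (use fK fm in auto)
  interpret sigma_finite_subalgebra M "Fa n" by (rule Fa_sf)
  have "AE x in M. real_cond_exp M (Fa n) f x \<le> K"
    by (rule real_cond_exp_le_c[OF fi], rule AE_I2) (use fK in \<open>force simp: abs_le_iff\<close>)
  moreover have "AE x in M. real_cond_exp M (Fa n) f x \<ge> -K"
    by (rule real_cond_exp_ge_c[OF fi], rule AE_I2) (use fK in \<open>force simp: abs_le_iff\<close>)
  ultimately show b: "AE x in M. \<bar>real_cond_exp M (Fa n) f x\<bar> \<le> K" by auto
  show "integrable M (real_cond_exp M (Fa n) f)"
    by (rule integrable_const_bound[where B=K]) (use b in auto)
qed

lemma e_prod_int: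
  assumes fm: "f \<in> borel_measurable M" and fK: "\<And>x. x \<in> space M \<Longrightarrow> \<bar>f x\<bar> \<le> K"
  shows "integrable M (\<lambda>x. real_cond_exp M (Fa n) f x * real_cond_exp M (Fa m) f x)"
proof (rule integrable_const_bound[where B="K*K"])
  show "AE x in M. norm (real_cond_exp M (Fa n) f x * real_cond_exp M (Fa m) f x) \<le> K*K"
    using AE_conjI[OF e_facts(2)[OF fm fK, of n] e_facts(2)[OF fm fK, of m]]
  proof (rule eventually_mono)
    fix x assume "\<bar>real_cond_exp M (Fa n) f x\<bar> \<le> K \<and> \<bar>real_cond_exp M (Fa m) f x\<bar> \<le> K"
    then show "norm (real_cond_exp M (Fa n) f x * real_cond_exp M (Fa m) f x) \<le> K*K"
      by (auto simp: abs_mult intro: mult_mono)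
  qed
qed simp

lemma e_cross:
  assumes fm: "f \<in> borel_measurable M" and fK: "\<And>x. x \<in> space M \<Longrightarrow> \<bar>f x\<bar> \<le> K"
    and nm: "n \<le> m"
  shows "(\<integral>x. real_cond_exp M (Fa m) f x * real_cond_exp M (Fa n) f x \<partial>M) =
         (\<integral>x. real_cond_exp M (Fa m) f x * real_cond_exp M (Fa m) f x \<partial>M)"
proof -
  interpret Fm: sigma_finite_subalgebra M "Fa m" by (rule Fa_sf)
  note fi = e_facts(1)[OF fm fK]
  let ?em = "real_cond_exp M (Fa m) f" and ?en = "real_cond_exp M (Fa n) f"
  have "(\<integral>x. ?em x * ?en x \<partial>M) = (\<integral>x. ?em x * real_cond_exp M (Fa m) ?en x \<partial>M)"
    by (rule Fm.real_cond_exp_intg(2)[symmetric]) (use e_prod_int[OF fm fK, of m n] in auto)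
  also have "\<dots> = (\<integral>x. ?em x * ?em x \<partial>M)"
  proof (rule integral_cong_AE)
    show "(\<lambda>x. ?em x * real_cond_exp M (Fa m) ?en x) \<in> borel_measurable M"
      by (intro borel_measurable_times borel_measurable_cond_exp2)
    show "(\<lambda>x. ?em x * ?em x) \<in> borel_measurable M"
      by (intro borel_measurable_times borel_measurable_cond_exp2)
    show "AE x in M. ?em x * real_cond_exp M (Fa m) ?en x = ?em x * ?em x"
    proof -
      have X: "AE x in M. real_cond_exp M (Fa m) ?en x = ?em x"
        by (rule Fm.real_cond_exp_nested_subalg[OF Fa_sub[of n] Fa_mono[OF nm] fi])
      show ?thesis using X by (rule eventually_mono) simp
    qed
  qed
  finally show ?thesis .
qed

lemma e_sq:
  assumes fm: "f \<in> borel_measurable M" and fK: "\<And>x. x \<in> space M \<Longrightarrow> \<bar>f x\<bar> \<le> K"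
    and nm: "n \<le> m"
  shows "(\<integral>x. (real_cond_exp M (Fa n) f x - real_cond_exp M (Fa m) f x) * (real_cond_exp M (Fa n) f x - real_cond_exp M (Fa m) f x) \<partial>M) =
         (\<integral>x. real_cond_exp M (Fa n) f x * real_cond_exp M (Fa n) f x \<partial>M) - (\<integral>x. real_cond_exp M (Fa m) f x * real_cond_exp M (Fa m) f x \<partial>M)"
proof -
  let ?em = "real_cond_exp M (Fa m) f" and ?en = "real_cond_exp M (Fa n) f"
  have i1: "integrable M (\<lambda>x. ?en x * ?en x)" by (rule e_prod_int[OF fm fK])
  have i2: "integrable M (\<lambda>x. ?em x * ?em x)" by (rule e_prod_int[OF fm fK])
  have i3: "integrable M (\<lambda>x. ?em x * ?en x)" by (rule e_prod_int[OF fm fK])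
  have "(\<integral>x. (?en x - ?em x) * (?en x - ?em x) \<partial>M) =
     (\<integral>x. (?en x * ?en x - ?em x * ?em x) - 2 * (?em x * ?en x - ?em x * ?em x) \<partial>M)"
    by (rule Bochner_Integration.integral_cong[OF refl]) (simp add: algebra_simps)
  also have "\<dots> = (\<integral>x. ?en x * ?en x - ?em x * ?em x \<partial>M) - (\<integral>x. 2 * (?em x * ?en x - ?em x * ?em x) \<partial>M)"
    by (intro Bochner_Integration.integral_diff Bochner_Integration.integrable_diff
        integrable_mult_right i1 i2 i3)
  also have "\<dots> = ((\<integral>x. ?en x * ?en x \<partial>M) - (\<integral>x. ?em x * ?em x \<partial>M)) -
       2 * ((\<integral>x. ?em x * ?en x \<partial>M) - (\<integral>x. ?em x * ?em x \<partial>M))"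
    using i1 i2 i3 by simp
  finally show ?thesis using e_cross[OF fm fK nm] by simp
qed

lemma e_L1C:
  assumes fm: "f \<in> borel_measurable M" and fK: "\<And>x. x \<in> space M \<Longrightarrow> \<bar>f x\<bar> \<le> K"
    and ep: "(\<epsilon>::real) > 0"
  shows "\<exists>N. \<forall>i\<ge>N. \<forall>j\<ge>N. LINT x|M. norm (real_cond_exp M (Fa i) f x - real_cond_exp M (Fa j) f x) < \<epsilon>"
proof -
  let ?e = "\<lambda>n. real_cond_exp M (Fa n) f"
  define a where "a n = (\<integral>x. ?e n x * ?e n x \<partial>M)" for n
  have sq: "(\<integral>x. (?e n x - ?e m x) * (?e n x - ?e m x) \<partial>M) = a n - a m" if "n \<le> m" for n m
    unfolding a_def by (rule e_sq[OF fm fK that])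
  have "decseq a" unfolding decseq_def
  proof (intro allI impI)
    fix n m :: nat assume "n \<le> m"
    have "0 \<le> (\<integral>x. (?e n x - ?e m x) * (?e n x - ?e m x) \<partial>M)" by (rule Bochner_Integration.integral_nonneg) simp
    then show "a m \<le> a n" using sq[OF \<open>n \<le> m\<close>] by simp
  qed
  moreover have "\<forall>i. 0 \<le> a i" unfolding a_def by (auto intro: Bochner_Integration.integral_nonneg)
  ultimately obtain L where "a \<longlonglongrightarrow> L" using decseq_convergent by blast
  then have "Cauchy a" by (rule LIMSEQ_imp_Cauchy)
  moreover have "0 < \<epsilon>*\<epsilon>/4" using ep by simp
  ultimately obtain N where N: "\<forall>m\<ge>N. \<forall>n\<ge>N. dist (a m) (a n) < \<epsilon>*\<epsilon>/4"
    using metric_CauchyD by blast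
  have key: "(\<integral>x. \<bar>?e p x - ?e q x\<bar> \<partial>M) < \<epsilon>" if "N \<le> p" "p \<le> q" for p q
  proof -
    let ?d = "\<lambda>x. ?e p x - ?e q x"
    have ip: "integrable M (?e p)" "integrable M (?e q)" using e_facts(3)[OF fm fK] by auto
    have idd: "integrable M (\<lambda>x. ?d x * ?d x)"
      using e_prod_int[OF fm fK, of p p] e_prod_int[OF fm fK, of p q] e_prod_int[OF fm fK, of q p] e_prod_int[OF fm fK, of q q]
      by (simp add: algebra_simps)
    have "(\<integral>x. \<bar>?d x\<bar> \<partial>M) \<le> (\<integral>x. \<epsilon>/4 + ?d x * ?d x / \<epsilon> \<partial>M)"
    proof (rule Bochner_Integration.integral_mono)
      show "integrable M (\<lambda>x. \<bar>?d x\<bar>)" using ip by auto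
      show "integrable M (\<lambda>x. \<epsilon>/4 + ?d x * ?d x / \<epsilon>)" using idd by auto
      fix x show "\<bar>?d x\<bar> \<le> \<epsilon>/4 + ?d x * ?d x / \<epsilon>" by (rule amgm_aux[OF ep])
    qed
    also have "\<dots> = \<epsilon>/4 + (\<integral>x. ?d x * ?d x \<partial>M) / \<epsilon>" using idd by (simp add: prob_space)
    also have "(\<integral>x. ?d x * ?d x \<partial>M) = a p - a q" by (rule sq[OF that(2)])
    also have "a p - a q < \<epsilon>*\<epsilon>/4"
    proof -
      have "dist (a p) (a q) < \<epsilon>*\<epsilon>/4" using N that by auto
      then show ?thesis unfolding dist_real_def by linarith
    qed
    then have "(a p - a q) / \<epsilon> < \<epsilon>/4" using ep by (simp add: divide_less_eq field_simps)
    then have "\<epsilon>/4 + (a p - a q) / \<epsilon> < \<epsilon>" using ep by linarith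
    finally show ?thesis .
  qed
  show ?thesis
  proof (intro exI allI impI)
    fix i j assume "N \<le> i" "N \<le> j"
    show "(LINT x|M. norm (?e i x - ?e j x)) < \<epsilon>"
    proof (cases "i \<le> j")
      case True then show ?thesis using key[OF \<open>N \<le> i\<close>] by simp
    next
      case False
      then have "(LINT x|M. norm (?e i x - ?e j x)) = (\<integral>x. \<bar>?e j x - ?e i x\<bar> \<partial>M)"
        by (simp add: abs_minus_commute)
      then show ?thesis using key[OF \<open>N \<le> j\<close>] False by simp
    qed
  qed
qed

end


lemma lim_shift: "lim (\<lambda>j. X (j + k)) = lim (X :: nat \<Rightarrow> real)"
proof -
  have "\<And>L. (\<lambda>j. X (j + k)) \<longlonglongrightarrow> L \<longleftrightarrow> X \<longlonglongrightarrow> L"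
    using LIMSEQ_ignore_initial_segment LIMSEQ_offset by metis
  then show ?thesis unfolding lim_def by simp
qed

context pfs begin

lemma AE_in_1: assumes "S \<in> sets M" "measure M S = 1" shows "AE x in M. x \<in> S"
proof -
  have "measure M (space M - S) = 0" using prob_compl[OF assms(1)] assms(2) by simp
  then have "emeasure M (space M - S) = 0" by (simp add: emeasure_eq_measure)
  moreover have "space M - S \<in> sets M" using assms(1) by auto
  ultimately have "AE x in M. x \<notin> space M - S" by (intro AE_not_in) (simp add: null_sets_def)
  then have "AE x in M. x \<notin> space M - S \<and> x \<in> space M" using AE_space by (rule AE_conjI)
  then show ?thesis by (rule eventually_mono) auto
qed

lemma AE_notin_0: assumes "S \<in> sets M" "measure M S = 0" shows "AE x in M. x \<notin> S"
proof -
  have "emeasure M S = 0" using assms by (simp add: emeasure_eq_measure)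
  then show ?thesis using assms(1) by (intro AE_not_in) (simp add: null_sets_def)
qed

lemma tail_trivial:
  assumes H: Hiii and S: "\<And>k. S \<in> sets (Fa k)"
  shows "measure M S = 0 \<or> measure M S = 1"
proof (rule tail01[OF H])
  show "S \<in> sets M" using S[of 0] Fa_sub[of 0] by (auto simp: subalgebra_def)
  fix n show "\<exists>C\<in>sets M. S = (\<phi>^^n) -` C \<inter> space M" using S[of n] by (auto simp: Fa_sets)
qed

lemma main_bdd:
  assumes H: Hiii and fm: "f \<in> borel_measurable M" and fK: "\<And>x. x \<in> space M \<Longrightarrow> \<bar>f x\<bar> \<le> K"
  shows "(\<lambda>n. \<integral>x. \<bar>(P^^n) f x - (\<integral>y. f y \<partial>M)\<bar> \<partial>M) \<longlonglongrightarrow> 0"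
proof -
  define c where "c = (\<integral>y. f y \<partial>M)"
  define e where "e n = real_cond_exp M (Fa n) f" for n
  have fi: "integrable M f" by (rule e_facts(1)[OF fm fK])
  have ei: "\<And>n. integrable M (e n)" unfolding e_def by (rule e_facts(3)[OF fm fK])
  have eb: "\<And>n. AE x in M. norm (e n x) \<le> K" unfolding e_def using e_facts(2)[OF fm fK] by simp
  have em: "\<And>n. e n \<in> borel_measurable M" unfolding e_def by simp
  have eint: "\<And>n. (\<integral>x. e n x \<partial>M) = c" unfolding e_def c_def
    using sigma_finite_subalgebra.real_cond_exp_int(2)[OF Fa_sf fi] by simp
  obtain r where r: "strict_mono r" and rC: "AE x in M. Cauchy (\<lambda>i. e (r i) x)"
  proof (rule cauchy_L1_AE_cauchy_subseq[of M e])
    show "\<And>n. integrable M (e n)" by (rule ei)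
    show "\<And>\<epsilon>. \<epsilon> > 0 \<Longrightarrow> \<exists>N. \<forall>i\<ge>N. \<forall>j\<ge>N. LINT x|M. norm (e i x - e j x) < \<epsilon>"
      unfolding e_def by (rule e_L1C[OF fm fK])
  qed auto
  define einf where "einf x = lim (\<lambda>i. e (r i) x)" for x
  have conv: "AE x in M. (\<lambda>i. e (r i) x) \<longlonglongrightarrow> einf x"
    using rC by (rule eventually_mono) (simp add: einf_def Cauchy_convergent_iff convergent_LIMSEQ_iff)
  have einfF: "einf \<in> borel_measurable (Fa k)" for k
  proof -
    have "einf = (\<lambda>x. lim (\<lambda>j. e (r (j + k)) x))"
      unfolding einf_def using lim_shift[of "\<lambda>i. e (r i) _" k] by simp
    moreover have "e (r (j + k)) \<in> borel_measurable (Fa k)" for j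
    proof -
      have "k \<le> r (j + k)" using seq_suble[OF r, of "j+k"] by simp
      then show ?thesis unfolding e_def
        by (rule measurable_from_subalg[OF Fa_mono borel_measurable_cond_exp])
    qed
    ultimately show ?thesis by simp
  qed
  have einfM: "einf \<in> borel_measurable M"
    by (rule measurable_from_subalg[OF Fa_sub einfF[of 0]])
  have dc: "(\<lambda>i. \<integral>x. e (r i) x \<partial>M) \<longlonglongrightarrow> (\<integral>x. einf x \<partial>M)"
    by (rule integral_dominated_convergence[OF einfM em integrable_const conv eb])
  have einf_int: "integrable M einf"
    by (rule integrable_dominated_convergence[OF einfM em integrable_const conv eb])
  have "(\<lambda>i. \<integral>x. e (r i) x \<partial>M) \<longlonglongrightarrow> c" using eint by simp
  with dc have ic: "(\<integral>x. einf x \<partial>M) = c" using LIMSEQ_unique by blast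
  define Tp where "Tp = {x\<in>space M. c < einf x}"
  define Tm where "Tm = {x\<in>space M. einf x < c}"
  have TpF: "Tp \<in> sets (Fa k)" for k
    using borel_measurable_less[of "\<lambda>_. c" "Fa k" einf] einfF[of k] unfolding Tp_def by simp
  have TmF: "Tm \<in> sets (Fa k)" for k
    using borel_measurable_less[of einf "Fa k" "\<lambda>_. c"] einfF[of k] unfolding Tm_def by simp
  have TpM: "Tp \<in> sets M" and TmM: "Tm \<in> sets M"
    using TpF[of 0] TmF[of 0] Fa_sub[of 0] by (auto simp: subalgebra_def)
  have "measure M Tp \<noteq> 1"
  proof
    assume "measure M Tp = 1"
    then have "AE x in M. x \<in> Tp" by (rule AE_in_1[OF TpM])
    then have "AE x in M. c < einf x" by (rule eventually_mono) (simp add: Tp_def)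
    then have "(\<integral>x. c \<partial>M) < (\<integral>x. einf x \<partial>M)"
      by (intro integral_less_AE_space einf_int) (auto simp: emeasure_space_1)
    then show False using ic by (simp add: prob_space)
  qed
  then have "AE x in M. x \<notin> Tp" using tail_trivial[OF H TpF] AE_notin_0[OF TpM] by auto
  moreover have "measure M Tm \<noteq> 1"
  proof
    assume "measure M Tm = 1"
    then have "AE x in M. x \<in> Tm" by (rule AE_in_1[OF TmM])
    then have "AE x in M. einf x < c" by (rule eventually_mono) (simp add: Tm_def)
    then have "(\<integral>x. einf x \<partial>M) < (\<integral>x. c \<partial>M)"
      by (intro integral_less_AE_space einf_int) (auto simp: emeasure_space_1)
    then show False using ic by (simp add: prob_space)
  qed
  then have "AE x in M. x \<notin> Tm" using tail_trivial[OF H TmF] AE_notin_0[OF TmM] by auto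
  ultimately have "AE x in M. x \<notin> Tp \<and> x \<notin> Tm" by (rule AE_conjI)
  then have "AE x in M. (x \<notin> Tp \<and> x \<notin> Tm) \<and> x \<in> space M" using AE_space by (rule AE_conjI)
  then have "AE x in M. einf x = c" by (rule eventually_mono) (auto simp: Tp_def Tm_def)
  with conv have conv2: "AE x in M. (\<lambda>i. \<bar>e (r i) x - c\<bar>) \<longlonglongrightarrow> 0"
  proof (eventually_elim)
    case (elim x)
    then have "(\<lambda>i. \<bar>e (r i) x - c\<bar>) \<longlonglongrightarrow> \<bar>einf x - c\<bar>" by (intro tendsto_intros)
    then show ?case using elim by simp
  qed
  define h where "h n = (\<integral>x. \<bar>(P^^n) f x - c\<bar> \<partial>M)" for n
  have he: "h n = (\<integral>x. \<bar>e n x - c\<bar> \<partial>M)" for n unfolding h_def e_def by (rule link_int[OF fi])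
  have "(\<lambda>i. \<integral>x. \<bar>e (r i) x - c\<bar> \<partial>M) \<longlonglongrightarrow> (\<integral>x. 0 \<partial>M)"
  proof (rule integral_dominated_convergence[where w="\<lambda>_. K + \<bar>c\<bar>"])
    show "(\<lambda>x. 0::real) \<in> borel_measurable M" by simp
    show "\<And>i. (\<lambda>x. \<bar>e (r i) x - c\<bar>) \<in> borel_measurable M" using em by simp
    show "integrable M (\<lambda>_. K + \<bar>c\<bar>)" by simp
    show "AE x in M. (\<lambda>i. \<bar>e (r i) x - c\<bar>) \<longlonglongrightarrow> 0" by (rule conv2)
    fix i show "AE x in M. norm \<bar>e (r i) x - c\<bar> \<le> K + \<bar>c\<bar>"
      using eb[of "r i"] by (rule eventually_mono) auto
  qed
  then have hr: "(\<lambda>i. h (r i)) \<longlonglongrightarrow> 0" using he by simp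
  have "decseq h" unfolding decseq_Suc_iff
  proof
    fix n show "h (Suc n) \<le> h n" unfolding h_def using Pn_contr_const[OF fi, of n 1 c] by simp
  qed
  moreover have "\<forall>i. 0 \<le> h i" unfolding h_def by (auto intro: Bochner_Integration.integral_nonneg)
  ultimately obtain L where hL: "h \<longlonglongrightarrow> L" using decseq_convergent by blast
  then have "(h \<circ> r) \<longlonglongrightarrow> L" using r by (rule LIMSEQ_subseq_LIMSEQ)
  with hr have "L = 0" using LIMSEQ_unique by (auto simp: o_def)
  with hL show ?thesis unfolding h_def c_def by simp
qed

end


context pfs begin

lemma exact_from_H:
  assumes H: Hiii shows "pf_exact M P"
  unfolding pf_exact_def
proof (intro allI impI)
  fix f :: "'a \<Rightarrow> real" assume fi: "integrable M f"
  have fm: "f \<in> borel_measurable M" using fi by auto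
  define c where "c = (\<integral>y. f y \<partial>M)"
  define g where "g k x = max (- real k) (min (real k) (f x))" for k x
  have gm: "g k \<in> borel_measurable M" for k unfolding g_def using fm by measurable
  have gK: "\<And>x. x \<in> space M \<Longrightarrow> \<bar>g k x\<bar> \<le> real k" for k unfolding g_def by auto
  have gi: "integrable M (g k)" for k by (rule e_facts(1)[OF gm gK])
  have approx: "(\<lambda>k. \<integral>x. \<bar>f x - g k x\<bar> \<partial>M) \<longlonglongrightarrow> (\<integral>x. 0 \<partial>M)"
  proof (rule integral_dominated_convergence[where w="\<lambda>x. \<bar>f x\<bar>"])
    show "(\<lambda>x. 0::real) \<in> borel_measurable M" by simp
    show "\<And>k. (\<lambda>x. \<bar>f x - g k x\<bar>) \<in> borel_measurable M" using fm gm by simp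
    show "integrable M (\<lambda>x. \<bar>f x\<bar>)" using fi by simp
    show "AE x in M. (\<lambda>k. \<bar>f x - g k x\<bar>) \<longlonglongrightarrow> 0"
    proof (rule AE_I2, rule tendsto_eventually)
      fix x
      have "\<forall>k\<ge>nat \<lceil>\<bar>f x\<bar>\<rceil>. \<bar>f x - g k x\<bar> = 0"
      proof (intro allI impI)
        fix k assume "nat \<lceil>\<bar>f x\<bar>\<rceil> \<le> k"
        then have "\<bar>f x\<bar> \<le> real k" by linarith
        then show "\<bar>f x - g k x\<bar> = 0" unfolding g_def by auto
      qed
      then show "\<forall>\<^sub>F k in sequentially. \<bar>f x - g k x\<bar> = 0"
        unfolding eventually_sequentially by blast
    qed
    fix k show "AE x in M. norm \<bar>f x - g k x\<bar> \<le> \<bar>f x\<bar>"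
      by (rule AE_I2) (auto simp: g_def)
  qed
  show "(\<lambda>n. \<integral>x. \<bar>(P^^n) f x - (\<integral>y. f y \<partial>M)\<bar> \<partial>M) \<longlonglongrightarrow> 0"
    unfolding c_def[symmetric]
  proof (rule LIMSEQ_I)
    fix \<epsilon> :: real assume ep: "0 < \<epsilon>"
    obtain k where k: "(\<integral>x. \<bar>f x - g k x\<bar> \<partial>M) < \<epsilon>/3"
      using LIMSEQ_D[OF approx, of "\<epsilon>/3"] ep by fastforce
    define ck where "ck = (\<integral>y. g k y \<partial>M)"
    obtain N where N: "\<forall>n\<ge>N. norm ((\<integral>x. \<bar>(P^^n) (g k) x - ck\<bar> \<partial>M) - 0) < \<epsilon>/3"
      using LIMSEQ_D[OF main_bdd[OF H gm gK], of "\<epsilon>/3"] ep unfolding ck_def by fastforce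
    have cc: "\<bar>ck - c\<bar> \<le> (\<integral>x. \<bar>f x - g k x\<bar> \<partial>M)"
    proof -
      have "ck - c = (\<integral>x. g k x - f x \<partial>M)" unfolding ck_def c_def using gi fi by simp
      then have "\<bar>ck - c\<bar> \<le> (\<integral>x. \<bar>g k x - f x\<bar> \<partial>M)" using integral_abs_bound by metis
      then show ?thesis by (simp add: abs_minus_commute)
    qed
    show "\<exists>no. \<forall>n\<ge>no. norm ((\<integral>x. \<bar>(P^^n) f x - c\<bar> \<partial>M) - 0) < \<epsilon>"
    proof (intro exI allI impI)
      fix n assume "N \<le> n"
      have i1: "integrable M ((P^^n) f)" by (rule Pn_int[OF fi])
      have i2: "integrable M ((P^^n) (g k))" by (rule Pn_int[OF gi])
      have "(\<integral>x. \<bar>(P^^n) f x - c\<bar> \<partial>M) \<le>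
         (\<integral>x. \<bar>(P^^n) f x - (P^^n) (g k) x\<bar> + \<bar>(P^^n) (g k) x - ck\<bar> + \<bar>ck - c\<bar> \<partial>M)"
        by (rule Bochner_Integration.integral_mono) (use i1 i2 in auto)
      also have "\<dots> = (\<integral>x. \<bar>(P^^n) f x - (P^^n) (g k) x\<bar> \<partial>M) + (\<integral>x. \<bar>(P^^n) (g k) x - ck\<bar> \<partial>M) + \<bar>ck - c\<bar>"
        using i1 i2 by (simp add: prob_space)
      also have "\<dots> < \<epsilon>/3 + \<epsilon>/3 + \<epsilon>/3"
      proof -
        have "(\<integral>x. \<bar>(P^^n) f x - (P^^n) (g k) x\<bar> \<partial>M) \<le> (\<integral>x. \<bar>f x - g k x\<bar> \<partial>M)"
          by (rule Pn_contr_diff[OF fi gi])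
        moreover have "(\<integral>x. \<bar>(P^^n) (g k) x - ck\<bar> \<partial>M) < \<epsilon>/3" using N \<open>N \<le> n\<close> by auto
        ultimately show ?thesis using k cc by linarith
      qed
      finally have "(\<integral>x. \<bar>(P^^n) f x - c\<bar> \<partial>M) < \<epsilon>" by simp
      moreover have "0 \<le> (\<integral>x. \<bar>(P^^n) f x - c\<bar> \<partial>M)" by (rule Bochner_Integration.integral_nonneg) simp
      ultimately show "norm ((\<integral>x. \<bar>(P^^n) f x - c\<bar> \<partial>M) - 0) < \<epsilon>" by simp
    qed
  qed
qed

end


context pfs begin

lemma set_int_abs_le:
  fixes h :: "'a \<Rightarrow> real"
  assumes "integrable M h" "A \<in> sets M"
  shows "\<bar>\<integral>x\<in>A. h x \<partial>M\<bar> \<le> (\<integral>x. \<bar>h x\<bar> \<partial>M)"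
proof -
  have "\<bar>\<integral>x\<in>A. h x \<partial>M\<bar> \<le> (\<integral>x. \<bar>indicator A x * h x\<bar> \<partial>M)"
    unfolding set_lebesgue_integral_def using integral_abs_bound by simp
  also have "\<dots> \<le> (\<integral>x. \<bar>h x\<bar> \<partial>M)"
  proof (rule Bochner_Integration.integral_mono)
    show "integrable M (\<lambda>x. \<bar>indicator A x * h x\<bar>)" using intind[OF assms(2,1)] by (rule integrable_abs)
    show "integrable M (\<lambda>x. \<bar>h x\<bar>)" using assms(1) by (rule integrable_abs)
    fix x show "\<bar>indicator A x * h x\<bar> \<le> \<bar>h x\<bar>" by (auto simp: indicator_def)
  qed
  finally show ?thesis .
qed

lemma exact_imp_ii:
  assumes ex: "pf_exact M P"
  shows "\<forall>B \<in> sets M.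
            (\<lambda>n. SUP A \<in> sets M.
                \<bar>measure M ((\<phi> ^^ n) -` A \<inter> space M \<inter> B) - measure M A * measure M B\<bar>)
            \<longlonglongrightarrow> 0"
proof
  fix B assume B: "B \<in> sets M"
  define f :: "'a \<Rightarrow> real" where "f = indicator B"
  have fi: "integrable M f" unfolding f_def using B by (simp add: emeasure_eq_measure)
  have intf: "(\<integral>y. f y \<partial>M) = measure M B" unfolding f_def using B by (simp add: sets.Int_space_eq2)
  define b where "b n = (\<integral>x. \<bar>(P^^n) f x - measure M B\<bar> \<partial>M)" for n
  have bl: "b \<longlonglongrightarrow> 0" using ex fi unfolding pf_exact_def b_def intf[symmetric] by blast
  let ?g = "\<lambda>n A. \<bar>measure M ((\<phi> ^^ n) -` A \<inter> space M \<inter> B) - measure M A * measure M B\<bar>"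
  have gb: "?g n A \<le> b n" if A: "A \<in> sets M" for n A
  proof -
    have A': "(\<phi>^^n) -` A \<inter> space M \<in> sets M" by (meson A measurable_sets phin_meas)
    have "measure M ((\<phi> ^^ n) -` A \<inter> space M \<inter> B) = (\<integral>x\<in>((\<phi>^^n) -` A \<inter> space M). f x \<partial>M)"
    proof -
      have "(\<integral>x\<in>((\<phi>^^n) -` A \<inter> space M). f x \<partial>M) = (\<integral>x. indicator ((\<phi> ^^ n) -` A \<inter> space M \<inter> B) x \<partial>M)"
        unfolding set_lebesgue_integral_def f_def
        by (rule Bochner_Integration.integral_cong[OF refl]) (auto simp: indicator_def)
      also have "\<dots> = measure M ((\<phi> ^^ n) -` A \<inter> space M \<inter> B)"
      proof -
        have "(\<phi> ^^ n) -` A \<inter> space M \<inter> B \<inter> space M = (\<phi> ^^ n) -` A \<inter> space M \<inter> B" by auto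
        then show ?thesis by simp
      qed
      finally show ?thesis by simp
    qed
    also have "\<dots> = (\<integral>x\<in>A. (P^^n) f x \<partial>M)" using Pn_eq[OF fi A] by simp
    finally have "?g n A = \<bar>\<integral>x\<in>A. (P^^n) f x - measure M B \<partial>M\<bar>"
      using set_int_const_diff[OF Pn_int[OF fi] A, of n "measure M B"] by (simp add: mult.commute)
    also have "\<dots> \<le> b n" unfolding b_def
      by (rule set_int_abs_le[OF _ A]) (use Pn_int[OF fi] in simp)
    finally show ?thesis .
  qed
  have ne: "sets M \<noteq> {}" using sets.empty_sets by blast
  show "(\<lambda>n. SUP A \<in> sets M. ?g n A) \<longlonglongrightarrow> 0"
  proof (rule tendsto_sandwich[of "\<lambda>n. 0" _ _ b])
    show "\<forall>\<^sub>F n in sequentially. 0 \<le> (SUP A \<in> sets M. ?g n A)"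
    proof (rule always_eventually, rule allI)
      fix n
      have "bdd_above (?g n ` sets M)" by (rule bdd_aboveI2[where M="b n"]) (rule gb)
      then have "?g n {} \<le> (SUP A \<in> sets M. ?g n A)" by (rule cSUP_upper[rotated]) simp
      then show "0 \<le> (SUP A \<in> sets M. ?g n A)" by linarith
    qed
    show "\<forall>\<^sub>F n in sequentially. (SUP A \<in> sets M. ?g n A) \<le> b n"
      by (rule always_eventually, rule allI, rule cSUP_least[OF ne gb])
  qed (use bl in auto)
qed

end

theorem theorem2p2:
  fixes M :: "'a measure" and \<phi> :: "'a \<Rightarrow> 'a"
    and P :: "('a \<Rightarrow> real) \<Rightarrow> ('a \<Rightarrow> real)"
  assumes "mpds M \<phi>"
    and "perron_frobenius M \<phi> P"
  shows "(pf_exact M P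
      \<longleftrightarrow> (\<forall>B \<in> sets M.
            (\<lambda>n. SUP A \<in> sets M.
                \<bar>measure M ((\<phi> ^^ n) -` A \<inter> space M \<inter> B) - measure M A * measure M B\<bar>)
            \<longlonglongrightarrow> 0))
    \<and> (pf_exact M P
      \<longleftrightarrow> (\<forall>B \<in> sets M. \<exists>D \<in> sets M. measure M D > 0 \<and>
            (\<lambda>n. SUP A \<in> (\<lambda>E. E \<inter> D) ` sets M.
                \<bar>measure M ((\<phi> ^^ n) -` A \<inter> space M \<inter> B) - measure M A * measure M B\<bar>)
            \<longlonglongrightarrow> 0))"
proof -
  interpret pfs M \<phi> P
    using assms unfolding mpds_def perron_frobenius_def pfs_def pfs_axioms_def by blast
  let ?ii = "\<forall>B \<in> sets M.
            (\<lambda>n. SUP A \<in> sets M.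
                \<bar>measure M ((\<phi> ^^ n) -` A \<inter> space M \<inter> B) - measure M A * measure M B\<bar>)
            \<longlonglongrightarrow> 0"
  have ii_iii: Hiii if ii: ?ii
  proof
    fix B assume B: "B \<in> sets M"
    have "(\<lambda>E. E \<inter> space M) ` sets M = sets M"
      by (auto simp: sets.Int_space_eq2 image_iff intro: bexI[of _ "_"])
    moreover have "measure M (space M) > 0" by (simp add: prob_space)
    ultimately show "\<exists>D \<in> sets M. measure M D > 0 \<and>
            (\<lambda>n. SUP A \<in> (\<lambda>E. E \<inter> D) ` sets M.
                \<bar>measure M ((\<phi> ^^ n) -` A \<inter> space M \<inter> B) - measure M A * measure M B\<bar>)
            \<longlonglongrightarrow> 0"
      using ii B by (intro bexI[of _ "space M"]) auto
  qed
  show ?thesis using exact_imp_ii ii_iii exact_from_H by blast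
qed


end
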